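(* Let $G_L\le GL(7,\mathbb{C})$ be the group generated by the permutation matrices $(12),(23),(34),(67)$ and the matrix $A$ defined in the context. Then $G_L$ is isomorphic to the Coxeter group $W(D_5)$, which has order $1920$.
   Context: A permutation $\sigma\in S_7$ is identified with the $7\times7$ permutation matrix sending the standard basis vector $e_i$ to $e_{\sigma(i)}$. The matrix $A\in GL(7,\mathbb{C})$ is \[ A=\begin{pmatrix} 1&0&0&0&0&0&0\\ 0&1&0&0&0&0&0\\ 0&0&-1&0&0&0&1\\ 0&0&0&-1&0&0&1\\ 0&0&-1&-1&1&0&1\\ 0&0&-1&-1&0&1&1\\ 0&0&0&0&0&0&1 \end{pmatrix}. \] $W(D_5)$ denotes the Coxeter group of type $D_5$. *)

theory Defs
  imports "Jordan_Normal_Form.Matrix" "HOL-Algebra.Generated_Groups"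
begin

definition GL_grp :: "nat \<Rightarrow> ('a::comm_ring_1) mat monoid" where
  "GL_grp n = \<lparr>carrier = {M \<in> carrier_mat n n. invertible_mat M},
               mult = (\<lambda>M N. M * N), one = 1\<^sub>m n\<rparr>"

definition gen_subgroup :: "nat \<Rightarrow> ('a::comm_ring_1) mat set \<Rightarrow> 'a mat monoid" where
  "gen_subgroup n S = (GL_grp n)\<lparr>carrier := generate (GL_grp n) S\<rparr>"

text \<open>Permutation matrix of sigma (indices 0..n-1 stand for 1..n): e_i is sent to e_(sigma i).\<close>
definition perm_matrix :: "nat \<Rightarrow> (nat \<Rightarrow> nat) \<Rightarrow> complex mat" where
  "perm_matrix n \<sigma> = mat n n (\<lambda>(r, c). if r = \<sigma> c then 1 else 0)"

definition A_mat :: "complex mat" where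
  "A_mat = mat_of_rows_list 7
    [[1, 0, 0, 0, 0, 0, 0],
     [0, 1, 0, 0, 0, 0, 0],
     [0, 0, -1, 0, 0, 0, 1],
     [0, 0, 0, -1, 0, 0, 1],
     [0, 0, -1, -1, 1, 0, 1],
     [0, 0, -1, -1, 0, 1, 1],
     [0, 0, 0, 0, 0, 0, 1]]"

text \<open>G_L = < (12), (23), (34), (67), A > inside GL(7,C) (0-based indices).\<close>
definition G_L :: "complex mat monoid" where
  "G_L = gen_subgroup 7
     {perm_matrix 7 (Transposition.transpose 0 1), perm_matrix 7 (Transposition.transpose 1 2),
      perm_matrix 7 (Transposition.transpose 2 3), perm_matrix 7 (Transposition.transpose 5 6),
      A_mat}"

definition roots_D :: "nat \<Rightarrow> real vec set" where
  "roots_D n = {v. \<exists>i j a b. i < n \<and> j < n \<and> i \<noteq> j \<and> a \<in> {-1, 1} \<and> b \<in> {-1, 1} \<and>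
       v = vec n (\<lambda>k. if k = i then a else if k = j then b else 0)}"

definition reflection_mat :: "nat \<Rightarrow> real vec \<Rightarrow> real mat" where
  "reflection_mat n \<alpha> = 1\<^sub>m n - (2 / (\<alpha> \<bullet> \<alpha>)) \<cdot>\<^sub>m mat n n (\<lambda>(r, c). \<alpha> $ r * \<alpha> $ c)"

definition W_D :: "nat \<Rightarrow> real mat monoid" where
  "W_D n = gen_subgroup n (reflection_mat n ` roots_D n)"

end

theory Submission imports Defs "HOL-Combinatorics.Permutations" begin

lemma invertible_mult_aux:
  fixes A B :: "'a::comm_ring_1 mat"
  assumes A: "A \<in> carrier_mat n n" "invertible_mat A" and B: "B \<in> carrier_mat n n" "invertible_mat B"
  shows "invertible_mat (A * B)"
proof -
  obtain A' where A': "A * A' = 1\<^sub>m n" "A' * A = 1\<^sub>m (dim_row A')"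
    using A unfolding invertible_mat_def inverts_mat_def by auto
  obtain B' where B': "B * B' = 1\<^sub>m n" "B' * B = 1\<^sub>m (dim_row B')"
    using B unfolding invertible_mat_def inverts_mat_def by auto
  have A'c: "A' \<in> carrier_mat n n"
    using A'(1) A'(2) A(1) by (metis carrier_matD(1) carrier_matD(2) carrier_matI index_mult_mat(2) index_mult_mat(3) index_one_mat(2) index_one_mat(3))
  have B'c: "B' \<in> carrier_mat n n"
    using B'(1) B'(2) B(1) by (metis carrier_matD(1) carrier_matD(2) carrier_matI index_mult_mat(2) index_mult_mat(3) index_one_mat(2) index_one_mat(3))
  have 1: "(A * B) * (B' * A') = 1\<^sub>m n"
  proof -
    have "(A * B) * (B' * A') = A * (B * B') * A'"
      using A B A'c B'c by (simp add: assoc_mult_mat[of _ n n _ n _ n])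
    also have "\<dots> = 1\<^sub>m n" using A'(1) B'(1) A(1) A'c by simp
    finally show ?thesis .
  qed
  have 2: "(B' * A') * (A * B) = 1\<^sub>m n"
  proof -
    have "(B' * A') * (A * B) = B' * (A' * A) * B"
      using A B A'c B'c by (simp add: assoc_mult_mat[of _ n n _ n _ n])
    also have "\<dots> = 1\<^sub>m n" using A'(2) B'(2) B(1) A'c B'c by simp
    finally show ?thesis .
  qed
  show ?thesis unfolding invertible_mat_def inverts_mat_def using 1 2 A B B'c A'c
    by (auto intro!: exI[of _ "B' * A'"])
qed

lemma GL_group: "group (GL_grp n :: ('a::comm_ring_1) mat monoid)"
proof (rule groupI)
  fix x y assume "x \<in> carrier (GL_grp n :: 'a mat monoid)" "y \<in> carrier (GL_grp n :: 'a mat monoid)"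
  then show "x \<otimes>\<^bsub>GL_grp n\<^esub> y \<in> carrier (GL_grp n)"
    by (auto simp: GL_grp_def intro: invertible_mult_aux)
next
  show "\<one>\<^bsub>GL_grp n\<^esub> \<in> carrier (GL_grp n :: 'a mat monoid)"
    by (auto simp: GL_grp_def invertible_mat_def inverts_mat_def square_mat.simps intro!: exI[of _ "1\<^sub>m n"])
next
  fix x y z assume "x \<in> carrier (GL_grp n :: 'a mat monoid)" "y \<in> carrier (GL_grp n :: 'a mat monoid)"
    "z \<in> carrier (GL_grp n :: 'a mat monoid)"
  then show "x \<otimes>\<^bsub>GL_grp n\<^esub> y \<otimes>\<^bsub>GL_grp n\<^esub> z = x \<otimes>\<^bsub>GL_grp n\<^esub> (y \<otimes>\<^bsub>GL_grp n\<^esub> z)"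
    by (auto simp: GL_grp_def intro: assoc_mult_mat)
next
  fix x assume "x \<in> carrier (GL_grp n :: 'a mat monoid)"
  then show "\<one>\<^bsub>GL_grp n\<^esub> \<otimes>\<^bsub>GL_grp n\<^esub> x = x" by (auto simp: GL_grp_def)
next
  fix x assume x: "x \<in> carrier (GL_grp n :: 'a mat monoid)"
  then have xc: "x \<in> carrier_mat n n" and xi: "invertible_mat x" by (auto simp: GL_grp_def)
  obtain B where B: "x * B = 1\<^sub>m n" "B * x = 1\<^sub>m (dim_row B)"
    using xc xi unfolding invertible_mat_def inverts_mat_def by auto
  have Bc: "B \<in> carrier_mat n n"
    using B xc by (metis carrier_matD(1) carrier_matD(2) carrier_matI index_mult_mat(2) index_mult_mat(3) index_one_mat(2) index_one_mat(3))
  have "invertible_mat B" using B Bc xc unfolding invertible_mat_def inverts_mat_def by auto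
  then show "\<exists>y\<in>carrier (GL_grp n). y \<otimes>\<^bsub>GL_grp n\<^esub> x = \<one>\<^bsub>GL_grp n\<^esub>"
    using Bc B by (auto simp: GL_grp_def intro!: bexI[of _ B])
qed


section \<open>Signed permutation matrices\<close>

definition spm :: "(nat \<Rightarrow> nat) \<Rightarrow> (nat \<Rightarrow> real) \<Rightarrow> real mat" where
  "spm p s = mat 5 5 (\<lambda>(r,c). if r = p c then s c else 0)"

lemma spm_carrier[simp]: "spm p s \<in> carrier_mat 5 5"
  by (simp add: spm_def)

lemma spm_dims[simp]: "dim_row (spm p s) = 5" "dim_col (spm p s) = 5"
  by (simp_all add: spm_def)

lemma spm_index: "r < 5 \<Longrightarrow> c < 5 \<Longrightarrow> spm p s $$ (r,c) = (if r = p c then s c else 0)"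
  by (simp add: spm_def)

lemma spm_mult:
  assumes q: "\<And>c. c < 5 \<Longrightarrow> q c < 5"
  shows "spm p s * spm q t = spm (p \<circ> q) (\<lambda>c. s (q c) * t c)"
proof (rule eq_matI)
  fix i j assume "i < dim_row (spm (p \<circ> q) (\<lambda>c. s (q c) * t c))" "j < dim_col (spm (p \<circ> q) (\<lambda>c. s (q c) * t c))"
  then have ij: "i < 5" "j < 5" by auto
  have "(spm p s * spm q t) $$ (i,j) = (\<Sum>k\<in>{0..<5}. spm p s $$ (i,k) * spm q t $$ (k,j))"
    using ij by (simp add: scalar_prod_def)
  also have "\<dots> = (\<Sum>k\<in>{0..<5}. (if i = p k then s k else 0) * (if k = q j then t j else 0))"
    using ij by (intro sum.cong) (auto simp: spm_index)
  also have "\<dots> = (\<Sum>k\<in>{0..<5}. if k = q j then (if i = p k then s k else 0) * t j else 0)"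
    by (intro sum.cong) auto
  also have "\<dots> = (if i = p (q j) then s (q j) else 0) * t j"
    using q[OF ij(2)] by (simp add: sum.delta)
  also have "\<dots> = spm (p \<circ> q) (\<lambda>c. s (q c) * t c) $$ (i,j)"
    using ij by (simp add: spm_index)
  finally show "(spm p s * spm q t) $$ (i,j) = spm (p \<circ> q) (\<lambda>c. s (q c) * t c) $$ (i,j)" .
qed auto

lemma spm_cong: "(\<And>c. c < 5 \<Longrightarrow> p c = p' c \<and> s c = s' c) \<Longrightarrow> spm p s = spm p' s'"
  unfolding spm_def by (intro eq_matI) auto

lemma spm_one: "spm id (\<lambda>_. 1) = 1\<^sub>m 5"
  by (intro eq_matI) (auto simp: spm_def)

definition SG :: "(nat \<Rightarrow> real) set" where
  "SG = {s. (\<forall>i<5. s i = 1 \<or> s i = -1) \<and> (\<forall>i. 5 \<le> i \<longrightarrow> s i = 1) \<and> prod s {..<5} = 1}"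

definition TT :: "real mat set" where
  "TT = {spm p s |p s. p permutes {..<5} \<and> s \<in> SG}"

lemma perm_lt5: "p permutes {..<5::nat} \<Longrightarrow> c < 5 \<Longrightarrow> p c < 5"
  using permutes_in_image by fastforce

lemma prod_perm5: "p permutes {..<5::nat} \<Longrightarrow> prod (\<lambda>c. s (p c)) {..<5} = prod s {..<5}"
  using prod.reindex[of p "{..<5}" s] permutes_inj_on[of p "{..<5}"] permutes_image[of p "{..<5}"]
  by (simp add: o_def)

lemma SG_mult:
  assumes p: "p permutes {..<5}" and s: "s \<in> SG" and t: "t \<in> SG"
  shows "(\<lambda>c. s (p c) * t c) \<in> SG"
proof -
  have "(\<forall>i<5. s (p i) * t i = 1 \<or> s (p i) * t i = -1)"
  proof (intro allI impI)
    fix i :: nat assume i: "i < 5"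
    have "s (p i) = 1 \<or> s (p i) = -1" using s perm_lt5[OF p i] unfolding SG_def by auto
    moreover have "t i = 1 \<or> t i = -1" using t i unfolding SG_def by auto
    ultimately show "s (p i) * t i = 1 \<or> s (p i) * t i = -1" by auto
  qed
  moreover have "\<forall>i. 5 \<le> i \<longrightarrow> s (p i) * t i = 1"
    using s t p permutes_not_in[OF p] unfolding SG_def by auto
  moreover have "prod (\<lambda>c. s (p c) * t c) {..<5} = 1"
    using s t prod_perm5[OF p, of s] unfolding SG_def by (simp add: prod.distrib)
  ultimately show ?thesis unfolding SG_def by blast
qed

lemma SG_sq: "s \<in> SG \<Longrightarrow> c < 5 \<Longrightarrow> s c * s c = 1"
  unfolding SG_def by auto

lemma spm_inv:
  assumes p: "p permutes {..<5}" and s: "s \<in> SG"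
  shows "spm p s * spm (inv_into UNIV p) (\<lambda>c. s (inv_into UNIV p c)) = 1\<^sub>m 5"
    and "spm (inv_into UNIV p) (\<lambda>c. s (inv_into UNIV p c)) * spm p s = 1\<^sub>m 5"
    and "(\<lambda>c. s (inv_into UNIV p c)) \<in> SG"
proof -
  have ip: "inv_into UNIV p permutes {..<5}" using permutes_inv[OF p] .
  show "spm p s * spm (inv_into UNIV p) (\<lambda>c. s (inv_into UNIV p c)) = 1\<^sub>m 5"
    unfolding spm_one[symmetric]
    by (subst spm_mult) (auto intro!: spm_cong simp: perm_lt5[OF ip] permutes_inverses[OF p] SG_sq[OF s])
  show "spm (inv_into UNIV p) (\<lambda>c. s (inv_into UNIV p c)) * spm p s = 1\<^sub>m 5"
    unfolding spm_one[symmetric]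
    by (subst spm_mult) (auto intro!: spm_cong simp: perm_lt5[OF p] permutes_inverses[OF p] SG_sq[OF s])
  have one: "(\<lambda>_. 1::real) \<in> SG" unfolding SG_def by auto
  show "(\<lambda>c. s (inv_into UNIV p c)) \<in> SG"
    using SG_mult[OF ip s one] by simp
qed

lemma TT_sub: "TT \<subseteq> carrier (GL_grp 5)"
proof
  fix x assume "x \<in> TT"
  then obtain p s where x: "x = spm p s" and p: "p permutes {..<5}" and s: "s \<in> SG"
    unfolding TT_def by auto
  show "x \<in> carrier (GL_grp 5)"
    unfolding GL_grp_def x using spm_inv[OF p s]
    by (auto simp: invertible_mat_def inverts_mat_def square_mat.simps intro!: exI[of _ "spm (inv_into UNIV p) (\<lambda>c. s (inv_into UNIV p c))"])
qed

lemma TT_mult: "a \<in> TT \<Longrightarrow> b \<in> TT \<Longrightarrow> a * b \<in> TT"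
proof -
  assume "a \<in> TT" "b \<in> TT"
  then obtain p s q t where a: "a = spm p s" and p: "p permutes {..<5}" and s: "s \<in> SG"
    and b: "b = spm q t" and q: "q permutes {..<5}" and t: "t \<in> SG"
    unfolding TT_def by auto
  have "a * b = spm (p \<circ> q) (\<lambda>c. s (q c) * t c)"
    unfolding a b by (rule spm_mult) (rule perm_lt5[OF q])
  moreover have "p \<circ> q permutes {..<5}" using permutes_compose[OF q p] .
  moreover have "(\<lambda>c. s (q c) * t c) \<in> SG" using SG_mult[OF q s t] .
  ultimately show ?thesis unfolding TT_def by blast
qed

lemma TT_subgroup: "subgroup TT (GL_grp 5)"
proof (rule group.subgroupI[OF GL_group])
  show "TT \<subseteq> carrier (GL_grp 5)" by (rule TT_sub)
  have "(\<lambda>_. 1::real) \<in> SG" unfolding SG_def by auto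
  then have "spm id (\<lambda>_. 1) \<in> TT" unfolding TT_def using permutes_id by blast
  then show "TT \<noteq> {}" by auto
  fix a assume "a \<in> TT"
  then obtain p s where a: "a = spm p s" and p: "p permutes {..<5}" and s: "s \<in> SG"
    unfolding TT_def by auto
  have bT: "spm (inv_into UNIV p) (\<lambda>c. s (inv_into UNIV p c)) \<in> TT"
    using spm_inv(3)[OF p s] permutes_inv[OF p] unfolding TT_def by blast
  have "inv\<^bsub>GL_grp 5\<^esub> a = spm (inv_into UNIV p) (\<lambda>c. s (inv_into UNIV p c))"
  proof (rule group.inv_equality[OF GL_group])
    show "a \<in> carrier (GL_grp 5)" using TT_sub \<open>a \<in> TT\<close> by auto
    show "spm (inv_into UNIV p) (\<lambda>c. s (inv_into UNIV p c)) \<in> carrier (GL_grp 5)" using TT_sub bT by auto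
    show "spm (inv_into UNIV p) (\<lambda>c. s (inv_into UNIV p c)) \<otimes>\<^bsub>GL_grp 5\<^esub> a = \<one>\<^bsub>GL_grp 5\<^esub>"
      using spm_inv(2)[OF p s] a by (simp add: GL_grp_def)
  qed
  then show "inv\<^bsub>GL_grp 5\<^esub> a \<in> TT" using bT by simp
next
  fix a b assume "a \<in> TT" "b \<in> TT"
  then show "a \<otimes>\<^bsub>GL_grp 5\<^esub> b \<in> TT" using TT_mult by (simp add: GL_grp_def)
qed


section \<open>Reflections\<close>

definition REF :: "nat \<Rightarrow> nat \<Rightarrow> real \<Rightarrow> real mat" where
  "REF i j c = spm (Transposition.transpose i j) (\<lambda>k. if k = i \<or> k = j then c else 1)"

definition RR :: "real mat set" where "RR = reflection_mat 5 ` roots_D 5"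

lemma sq_pm1: "a \<in> {-1, 1::real} \<Longrightarrow> a * a = 1" by auto

lemma refl_eq:
  assumes ij: "i < 5" "j < 5" "i \<noteq> j" and a: "a \<in> {-1, 1::real}" and b: "b \<in> {-1, 1::real}"
  shows "reflection_mat 5 (vec 5 (\<lambda>k. if k = i then a else if k = j then b else 0)) = REF i j (-(a*b))"
proof -
  let ?v = "vec 5 (\<lambda>k. if k = i then a else if k = j then b else 0) :: real vec"
  have "?v \<bullet> ?v = (\<Sum>k\<in>{0..<5}. ?v $ k * ?v $ k)" by (simp add: scalar_prod_def)
  also have "\<dots> = (\<Sum>k\<in>{0..<5}. (if k = i then 1 else 0) + (if k = j then 1 else 0))"
    using ij sq_pm1[OF a] sq_pm1[OF b] by (intro sum.cong) auto
  also have "\<dots> = 2" using ij by (simp add: sum.distrib)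
  finally have vv: "?v \<bullet> ?v = 2" .
  show ?thesis
    unfolding reflection_mat_def vv REF_def
  proof (rule eq_matI)
    fix r c assume "r < dim_row (spm (Transposition.transpose i j) (\<lambda>k. if k = i \<or> k = j then - (a * b) else 1))"
      "c < dim_col (spm (Transposition.transpose i j) (\<lambda>k. if k = i \<or> k = j then - (a * b) else 1))"
    then have rc: "r < 5" "c < 5" by auto
    show "(1\<^sub>m 5 - (2 / 2) \<cdot>\<^sub>m mat 5 5 (\<lambda>(r, c). ?v $ r * ?v $ c)) $$ (r, c) =
        spm (Transposition.transpose i j) (\<lambda>k. if k = i \<or> k = j then - (a * b) else 1) $$ (r, c)"
      using rc ij sq_pm1[OF a] sq_pm1[OF b] by (auto simp: spm_index Transposition.transpose_def mult.commute)
  qed auto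
qed

lemma REF_in_RR: "i < 5 \<Longrightarrow> j < 5 \<Longrightarrow> i \<noteq> j \<Longrightarrow> c \<in> {-1, 1::real} \<Longrightarrow> REF i j c \<in> RR"
proof -
  assume ij: "i < 5" "j < 5" "i \<noteq> j" and c: "c \<in> {-1, 1::real}"
  have "-c \<in> {-1, 1::real}" using c by auto
  then have "vec 5 (\<lambda>k. if k = i then 1 else if k = j then -c else 0) \<in> roots_D 5"
    unfolding roots_D_def mem_Collect_eq
    by (rule_tac x=i in exI, rule_tac x=j in exI, rule_tac x=1 in exI, rule_tac x="-c" in exI) (use ij in simp)
  moreover have "reflection_mat 5 (vec 5 (\<lambda>k. if k = i then 1 else if k = j then -c else 0)) = REF i j (-(1 * -c))"
    by (rule refl_eq[OF ij]) (use \<open>-c \<in> _\<close> in auto)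
  ultimately show ?thesis unfolding RR_def by (intro image_eqI[of _ "reflection_mat 5"]) simp_all
qed

lemma RR_cases: "x \<in> RR \<Longrightarrow> \<exists>i j c. i < 5 \<and> j < 5 \<and> i \<noteq> j \<and> c \<in> {-1, 1::real} \<and> x = REF i j c"
proof -
  assume "x \<in> RR"
  then obtain v where v: "v \<in> roots_D 5" and xv: "x = reflection_mat 5 v" unfolding RR_def by auto
  from v obtain i j a b where ij: "i < 5" "j < 5" "i \<noteq> j" and a: "a \<in> {-1, 1::real}" and b: "b \<in> {-1, 1::real}"
    and vv: "v = vec 5 (\<lambda>k. if k = i then a else if k = j then b else 0)"
    unfolding roots_D_def by auto
  note x = xv[unfolded vv]
  have "-(a*b) \<in> {-1, 1::real}" using a b by auto
  then show ?thesis using refl_eq[OF ij a b] x ij by (intro exI[of _ i] exI[of _ j] exI[of _ "-(a*b)"]) simp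
qed

lemma prod_pair: "i < 5 \<Longrightarrow> j < 5 \<Longrightarrow> i \<noteq> j \<Longrightarrow>
   prod (\<lambda>k. if k = i \<or> k = j then c else 1) {..<5::nat} = (c::real) * c"
proof -
  assume ij: "i < 5" "j < 5" "i \<noteq> j"
  have "prod (\<lambda>k. if k = i \<or> k = j then c else 1) {..<5::nat} = prod (\<lambda>k. c) ({..<5} \<inter> {k. k = i \<or> k = j}) * prod (\<lambda>k. 1) ({..<5} \<inter> - {k. k = i \<or> k = j})"
    by (rule prod.If_cases) simp
  also have "{..<5} \<inter> {k. k = i \<or> k = j} = {i, j}" using ij by auto
  finally show ?thesis using ij by simp
qed

lemma REF_TT: "i < 5 \<Longrightarrow> j < 5 \<Longrightarrow> i \<noteq> j \<Longrightarrow> c \<in> {-1, 1::real} \<Longrightarrow> REF i j c \<in> TT"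
proof -
  assume ij: "i < 5" "j < 5" "i \<noteq> j" and c: "c \<in> {-1, 1::real}"
  have "(\<lambda>k. if k = i \<or> k = j then c else 1) \<in> SG"
    unfolding SG_def using ij c prod_pair[OF ij, of c] by auto
  moreover have "Transposition.transpose i j permutes {..<5}" using ij by (intro permutes_swap_id) auto
  ultimately show ?thesis unfolding REF_def TT_def by blast
qed

lemma RR_TT: "RR \<subseteq> TT" using RR_cases REF_TT by blast

lemma GL5_mult: "x \<otimes>\<^bsub>GL_grp n\<^esub> y = x * y" by (simp add: GL_grp_def)
lemma GL5_one: "\<one>\<^bsub>GL_grp n\<^esub> = 1\<^sub>m n" by (simp add: GL_grp_def)

lemma gen_mult: "x \<in> generate (GL_grp n) H \<Longrightarrow> y \<in> generate (GL_grp n) H \<Longrightarrow> x * y \<in> generate (GL_grp n) H"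
  using generate.eng[of x "GL_grp n" H y] by (simp add: GL5_mult)

lemma gen_one: "1\<^sub>m n \<in> generate (GL_grp n) H"
  using generate.one[of "GL_grp n" H] by (simp add: GL5_one)

lemma perm_gen: assumes "p permutes {..<5::nat}" shows "spm p (\<lambda>_. 1) \<in> generate (GL_grp 5) RR"
  using assms finite_lessThan[of 5]
proof (induction rule: permutes_induct)
  case id
  have "spm id (\<lambda>_. 1) \<in> generate (GL_grp 5) RR" using gen_one[of 5 RR] spm_one by simp
  then show ?case by (simp add: id_def)
next
  case (swap a b p)
  have "spm (Transposition.transpose a b \<circ> p) (\<lambda>_. 1) = spm (Transposition.transpose a b) (\<lambda>_. 1) * spm p (\<lambda>_. 1)"
    using spm_mult[of p "Transposition.transpose a b" "\<lambda>_. 1" "\<lambda>_. 1"] perm_lt5[OF swap.hyps(4)] by simp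
  moreover have "spm (Transposition.transpose a b) (\<lambda>_. 1) = REF a b 1"
    unfolding REF_def by (rule spm_cong) simp
  moreover have "REF a b 1 \<in> RR" using swap.hyps REF_in_RR by auto
  ultimately have "spm (Transposition.transpose a b \<circ> p) (\<lambda>_. 1) \<in> generate (GL_grp 5) RR"
    using gen_mult[OF generate.incl swap.IH, of "REF a b 1"] by simp
  then show ?case by (simp add: o_def)
qed

lemma sign_gen: "s \<in> SG \<Longrightarrow> spm id s \<in> generate (GL_grp 5) RR"
proof (induction "card {k. k < 5 \<and> s k = -1}" arbitrary: s rule: less_induct)
  case less
  show ?case
  proof (cases "\<exists>i<5. s i = -1")
    case False
    then have "spm id s = spm id (\<lambda>_. 1)" using less.prems unfolding SG_def by (intro spm_cong) auto
    then show ?thesis using gen_one spm_one by simp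
  next
    case True
    then obtain i where i: "i < 5" "s i = -1" by auto
    have "\<exists>j<5. j \<noteq> i \<and> s j = -1"
    proof (rule ccontr)
      assume "\<not> ?thesis"
      then have others: "\<And>k. k < 5 \<Longrightarrow> k \<noteq> i \<Longrightarrow> s k = 1" using less.prems unfolding SG_def by auto
      have "prod s {..<5} = s i * prod s ({..<5} - {i})" using i by (intro prod.remove) auto
      also have "prod s ({..<5} - {i}) = 1" using others by (intro prod.neutral) auto
      finally have "prod s {..<5} = -1" using i by simp
      then show False using less.prems unfolding SG_def by auto
    qed
    then obtain j where j: "j < 5" "j \<noteq> i" "s j = -1" by auto
    define d where "d = (\<lambda>k. if k = i \<or> k = j then -1 else 1::real)"
    define s' where "s' = (\<lambda>k. s k * d k)"
    have s'SG: "s' \<in> SG"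
    proof -
      have "prod s' {..<5} = prod s {..<5} * prod d {..<5}" unfolding s'_def by (simp add: prod.distrib)
      also have "prod d {..<5} = 1" unfolding d_def using prod_pair[OF i(1) j(1) j(2)[symmetric], of "-1"] by simp
      finally have "prod s' {..<5} = 1" using less.prems unfolding SG_def by simp
      moreover have "\<forall>k<5. s' k = 1 \<or> s' k = -1"
      proof (intro allI impI)
        fix k :: nat assume k: "k < 5"
        have "s k = 1 \<or> s k = -1" using less.prems k unfolding SG_def by auto
        then show "s' k = 1 \<or> s' k = -1" unfolding s'_def d_def by auto
      qed
      moreover have "\<forall>k. 5 \<le> k \<longrightarrow> s' k = 1" using less.prems i j unfolding SG_def s'_def d_def by auto
      ultimately show ?thesis unfolding SG_def by blast
    qed
    have sub: "{k. k < 5 \<and> s' k = -1} \<subset> {k. k < 5 \<and> s k = -1}"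
    proof
      show "{k. k < 5 \<and> s' k = -1} \<subseteq> {k. k < 5 \<and> s k = -1}"
      proof
        fix k assume "k \<in> {k. k < 5 \<and> s' k = -1}"
        then have k: "k < 5" "s k * d k = -1" unfolding s'_def by auto
        show "k \<in> {k. k < 5 \<and> s k = -1}"
        proof (cases "k = i \<or> k = j")
          case True then show ?thesis using i j k by auto
        next
          case False then show ?thesis using k unfolding d_def by auto
        qed
      qed
      have "s' i = 1" unfolding s'_def d_def using i by simp
      then have "i \<notin> {k. k < 5 \<and> s' k = -1}" by simp
      moreover have "i \<in> {k. k < 5 \<and> s k = -1}" using i by simp
      ultimately show "{k. k < 5 \<and> s' k = -1} \<noteq> {k. k < 5 \<and> s k = -1}" by blast
    qed
    have "card {k. k < 5 \<and> s' k = -1} < card {k. k < 5 \<and> s k = -1}"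
      by (rule psubset_card_mono[OF _ sub]) auto
    then have g1: "spm id s' \<in> generate (GL_grp 5) RR" using less.hyps s'SG by blast
    have "REF i j 1 * REF i j (-1) = spm id d"
      unfolding REF_def d_def
      by (subst spm_mult) (use i j in \<open>auto intro!: spm_cong simp: Transposition.transpose_def\<close>)
    moreover have "REF i j 1 \<in> generate (GL_grp 5) RR" by (rule generate.incl, rule REF_in_RR) (use i j in auto)
    moreover have "REF i j (-1) \<in> generate (GL_grp 5) RR" by (rule generate.incl, rule REF_in_RR) (use i j in auto)
    ultimately have g2: "spm id d \<in> generate (GL_grp 5) RR"
      using gen_mult by metis
    have "spm id s' * spm id d = spm id s"
      by (subst spm_mult) (auto intro!: spm_cong simp: s'_def d_def)
    then show ?thesis using gen_mult[OF g1 g2] by simp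
  qed
qed

lemma TT_gen: "TT \<subseteq> generate (GL_grp 5) RR"
proof
  fix x assume "x \<in> TT"
  then obtain p s where x: "x = spm p s" and p: "p permutes {..<5}" and s: "s \<in> SG"
    unfolding TT_def by auto
  have "spm p (\<lambda>_. 1) * spm id s = spm p s"
    by (subst spm_mult) (auto intro!: spm_cong)
  then show "x \<in> generate (GL_grp 5) RR" using gen_mult[OF perm_gen[OF p] sign_gen[OF s]] x by simp
qed

lemma gen_RR: "generate (GL_grp 5) RR = TT"
  using TT_gen group.generate_subgroup_incl[OF GL_group RR_TT TT_subgroup] by blast


section \<open>Counting\<close>

lemma prod_pm1: "finite A \<Longrightarrow> (\<And>k. k \<in> A \<Longrightarrow> f k \<in> {-1, 1::real}) \<Longrightarrow> prod f A \<in> {-1, 1}"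
proof (induction A rule: finite_induct)
  case empty then show ?case by simp
next
  case (insert x F)
  then have fx: "f x = -1 \<or> f x = 1" and pF: "prod f F = -1 \<or> prod f F = 1" by auto
  have "prod f (insert x F) = f x * prod f F" using insert.hyps by simp
  then show ?case using fx pF by auto
qed

definition gSG :: "(nat \<Rightarrow> real) \<Rightarrow> (nat \<Rightarrow> real)" where
  "gSG f = (\<lambda>k. if k < 4 then f k else if k = 4 then prod f {..<4} else 1)"

lemma lessThan5: "{..<5::nat} = insert 4 {..<4}" by auto

lemma gSG_in: "f \<in> PiE {..<4} (\<lambda>_. {-1, 1::real}) \<Longrightarrow> gSG f \<in> SG"
proof -
  assume f: "f \<in> PiE {..<4} (\<lambda>_. {-1, 1::real})"
  have P: "prod f {..<4} \<in> {-1, 1}" using f by (intro prod_pm1) auto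
  have "prod (gSG f) {..<5} = gSG f 4 * prod (gSG f) {..<4}" unfolding lessThan5 by simp
  also have "prod (gSG f) {..<4} = prod f {..<4}" unfolding gSG_def by (intro prod.cong) auto
  also have "gSG f 4 = prod f {..<4}" unfolding gSG_def by simp
  finally have "prod (gSG f) {..<5} = 1" using P by auto
  moreover have "\<forall>i<5. gSG f i = 1 \<or> gSG f i = -1" using f P unfolding gSG_def by (auto simp: PiE_iff)
  moreover have "\<forall>i. 5 \<le> i \<longrightarrow> gSG f i = 1" unfolding gSG_def by auto
  ultimately show ?thesis unfolding SG_def by blast
qed

lemma SG_image: "SG = gSG ` PiE {..<4} (\<lambda>_. {-1, 1::real})"
proof
  show "gSG ` PiE {..<4} (\<lambda>_. {-1, 1::real}) \<subseteq> SG" using gSG_in by auto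
  show "SG \<subseteq> gSG ` PiE {..<4} (\<lambda>_. {-1, 1::real})"
  proof
    fix s assume s: "s \<in> SG"
    have "\<forall>k<4. s k \<in> {-1, 1}"
    proof (intro allI impI)
      fix k :: nat assume "k < 4" then have "k < 5" by simp
      then show "s k \<in> {-1, 1}" using s unfolding SG_def by auto
    qed
    then have r: "restrict s {..<4} \<in> PiE {..<4} (\<lambda>_. {-1, 1::real})" by auto
    have "prod s {..<5} = s 4 * prod s {..<4}" unfolding lessThan5 by simp
    then have "s 4 * prod s {..<4} = 1" using s unfolding SG_def by simp
    moreover have "s 4 * s 4 = 1" using SG_sq[OF s, of 4] by simp
    ultimately have "s 4 = prod s {..<4}"
      by (metis mult.assoc mult.commute mult.left_neutral)
    then have "s = gSG (restrict s {..<4})"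
      using s unfolding gSG_def SG_def by (auto simp: fun_eq_iff)
    then show "s \<in> gSG ` PiE {..<4} (\<lambda>_. {-1, 1::real})" using r by blast
  qed
qed

lemma gSG_inj: "inj_on gSG (PiE {..<4} (\<lambda>_. {-1, 1::real}))"
proof (rule inj_onI)
  fix f g assume f: "f \<in> PiE {..<4} (\<lambda>_. {-1, 1::real})" and g: "g \<in> PiE {..<4} (\<lambda>_. {-1, 1::real})"
    and eq: "gSG f = gSG g"
  show "f = g"
  proof (rule PiE_ext[OF f g])
    fix k :: nat assume "k \<in> {..<4}"
    then show "f k = g k" using fun_cong[OF eq, of k] unfolding gSG_def by simp
  qed
qed

lemma card_SG: "card SG = 16"
proof -
  have "card SG = card (PiE {..<4::nat} (\<lambda>_. {-1, 1::real}))"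
    unfolding SG_image by (rule card_image[OF gSG_inj])
  also have "\<dots> = card {-1, 1::real} ^ 4" by (simp add: card_PiE)
  also have "card {-1, 1::real} = 2" by simp
  finally show ?thesis by simp
qed
lemma dummy: "True" by simp
lemma spm_inj:
  assumes p: "p permutes {..<5}" and s: "s \<in> SG" and q: "q permutes {..<5}" and t: "t \<in> SG"
    and eq: "spm p s = spm q t"
  shows "p = q \<and> s = t"
proof -
  have *: "p c = q c \<and> s c = t c" if c: "c < 5" for c
  proof -
    have pc: "p c < 5" using perm_lt5[OF p c] .
    have "spm p s $$ (p c, c) = s c" using pc c by (simp add: spm_index)
    moreover have "s c \<noteq> 0" using s c unfolding SG_def by auto
    ultimately have "spm q t $$ (p c, c) \<noteq> 0" using eq by simp
    then have "p c = q c" using pc c by (simp add: spm_index split: if_splits)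
    then show ?thesis using eq \<open>spm p s $$ (p c, c) = s c\<close> pc c by (simp add: spm_index)
  qed
  have "p = q"
  proof
    fix c show "p c = q c"
      using *[of c] permutes_not_in[OF p, of c] permutes_not_in[OF q, of c] by (cases "c < 5") auto
  qed
  moreover have "s = t"
  proof
    fix c show "s c = t c"
      using *[of c] s t unfolding SG_def by (cases "c < 5") auto
  qed
  ultimately show ?thesis by simp
qed

lemma card_TT: "card TT = 1920"
proof -
  have "TT = (\<lambda>(p, s). spm p s) ` ({p. p permutes {..<5::nat}} \<times> SG)"
    unfolding TT_def by auto
  moreover have "inj_on (\<lambda>(p, s). spm p s) ({p. p permutes {..<5::nat}} \<times> SG)"
    using spm_inj by (auto intro!: inj_onI)
  ultimately have "card TT = card ({p. p permutes {..<5::nat}} \<times> SG)"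
    using card_image by metis
  also have "\<dots> = card {p. p permutes {..<5::nat}} * card SG" by (rule card_cartesian_product)
  also have "card {p. p permutes {..<5::nat}} = fact 5" by (rule card_permutations) auto
  finally show ?thesis using card_SG by (simp add: fact_numeral)
qed


section \<open>Words for the reflections\<close>

definition W0 :: "real mat" where "W0 = spm (Transposition.transpose 1 2) (\<lambda>k. if k = 1 \<or> k = 2 then -1 else 1)"
definition W1 :: "real mat" where "W1 = spm (Transposition.transpose 0 1) (\<lambda>_. 1)"
definition W2 :: "real mat" where "W2 = spm (Transposition.transpose 1 2) (\<lambda>_. 1)"
definition W3 :: "real mat" where "W3 = spm (Transposition.transpose 3 4) (\<lambda>_. 1)"
definition W4 :: "real mat" where "W4 = spm (Transposition.transpose 0 3 \<circ> Transposition.transpose 1 2) (\<lambda>_. 1)"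
definition WG :: "real mat set" where "WG = {W0, W1, W2, W3, W4}"

lemma spm_mult_tr: "a < 5 \<Longrightarrow> b < 5 \<Longrightarrow>
  spm p s * spm (Transposition.transpose a b) t = spm (p \<circ> Transposition.transpose a b) (\<lambda>c. s (Transposition.transpose a b c) * t c)"
  by (rule spm_mult) (auto simp: Transposition.transpose_def)

lemma spm_mult_tr2: "a < 5 \<Longrightarrow> b < 5 \<Longrightarrow> a' < 5 \<Longrightarrow> b' < 5 \<Longrightarrow>
  spm p s * spm (Transposition.transpose a b \<circ> Transposition.transpose a' b') t =
  spm (p \<circ> (Transposition.transpose a b \<circ> Transposition.transpose a' b')) (\<lambda>c. s ((Transposition.transpose a b \<circ> Transposition.transpose a' b') c) * t c)"
  by (rule spm_mult) (auto simp: Transposition.transpose_def)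

lemma spm_cong5: "p 0 = p' 0 \<Longrightarrow> s 0 = s' 0 \<Longrightarrow> p 1 = p' 1 \<Longrightarrow> s 1 = s' 1 \<Longrightarrow> p 2 = p' 2 \<Longrightarrow> s 2 = s' 2 \<Longrightarrow>
  p 3 = p' 3 \<Longrightarrow> s 3 = s' 3 \<Longrightarrow> p 4 = p' 4 \<Longrightarrow> s 4 = s' 4 \<Longrightarrow> spm p s = spm p' s'"
proof (rule spm_cong)
  fix c :: nat assume "c < 5"
  then have "c = 0 \<or> c = 1 \<or> c = 2 \<or> c = 3 \<or> c = 4" by auto
  moreover assume "p 0 = p' 0" "s 0 = s' 0" "p 1 = p' 1" "s 1 = s' 1" "p 2 = p' 2" "s 2 = s' 2"
    "p 3 = p' 3" "s 3 = s' 3" "p 4 = p' 4" "s 4 = s' 4"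
  ultimately show "p c = p' c \<and> s c = s' c" by auto
qed

lemma WG_gen: "W0 \<in> generate (GL_grp 5) WG" "W1 \<in> generate (GL_grp 5) WG" "W2 \<in> generate (GL_grp 5) WG"
  "W3 \<in> generate (GL_grp 5) WG" "W4 \<in> generate (GL_grp 5) WG"
  unfolding WG_def by (auto intro: generate.incl)

lemma R_0_1_m: "REF 0 1 (-1) \<in> generate (GL_grp 5) WG"
proof -
  have "W0 * W1 * W2 * W1 * W0 = REF 0 1 (-1)"
    unfolding W4_def W0_def W1_def W2_def W3_def REF_def
    by (simp add: spm_mult_tr spm_mult_tr2, rule spm_cong5) (simp_all add: Transposition.transpose_def)
  then show ?thesis using gen_mult[OF gen_mult[OF gen_mult[OF gen_mult[OF WG_gen(1) WG_gen(2)] WG_gen(3)] WG_gen(2)] WG_gen(1)] by simp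
qed

lemma R_0_1_p: "REF 0 1 1 \<in> generate (GL_grp 5) WG"
proof -
  have "W1 = REF 0 1 1"
    unfolding W4_def W0_def W1_def W2_def W3_def REF_def
    by (rule spm_cong5) (simp_all add: Transposition.transpose_def)
  then show ?thesis using WG_gen(2) by simp
qed

lemma R_0_2_m: "REF 0 2 (-1) \<in> generate (GL_grp 5) WG"
proof -
  have "W0 * W1 * W0 = REF 0 2 (-1)"
    unfolding W4_def W0_def W1_def W2_def W3_def REF_def
    by (simp add: spm_mult_tr spm_mult_tr2, rule spm_cong5) (simp_all add: Transposition.transpose_def)
  then show ?thesis using gen_mult[OF gen_mult[OF WG_gen(1) WG_gen(2)] WG_gen(1)] by simp
qed

lemma R_0_2_p: "REF 0 2 1 \<in> generate (GL_grp 5) WG"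
proof -
  have "W1 * W2 * W1 = REF 0 2 1"
    unfolding W4_def W0_def W1_def W2_def W3_def REF_def
    by (simp add: spm_mult_tr spm_mult_tr2, rule spm_cong5) (simp_all add: Transposition.transpose_def)
  then show ?thesis using gen_mult[OF gen_mult[OF WG_gen(2) WG_gen(3)] WG_gen(2)] by simp
qed

lemma R_0_3_m: "REF 0 3 (-1) \<in> generate (GL_grp 5) WG"
proof -
  have "W1 * W0 * W4 * W1 * W0 * W4 * W1 = REF 0 3 (-1)"
    unfolding W4_def W0_def W1_def W2_def W3_def REF_def
    by (simp add: spm_mult_tr spm_mult_tr2, rule spm_cong5) (simp_all add: Transposition.transpose_def)
  then show ?thesis using gen_mult[OF gen_mult[OF gen_mult[OF gen_mult[OF gen_mult[OF gen_mult[OF WG_gen(2) WG_gen(1)] WG_gen(5)] WG_gen(2)] WG_gen(1)] WG_gen(5)] WG_gen(2)] by simp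
qed

lemma R_0_3_p: "REF 0 3 1 \<in> generate (GL_grp 5) WG"
proof -
  have "W2 * W4 = REF 0 3 1"
    unfolding W4_def W0_def W1_def W2_def W3_def REF_def
    by (simp add: spm_mult_tr spm_mult_tr2, rule spm_cong5) (simp_all add: Transposition.transpose_def)
  then show ?thesis using gen_mult[OF WG_gen(3) WG_gen(5)] by simp
qed

lemma R_0_4_m: "REF 0 4 (-1) \<in> generate (GL_grp 5) WG"
proof -
  have "W1 * W0 * W3 * W4 * W1 * W0 * W4 * W1 * W3 = REF 0 4 (-1)"
    unfolding W4_def W0_def W1_def W2_def W3_def REF_def
    by (simp add: spm_mult_tr spm_mult_tr2, rule spm_cong5) (simp_all add: Transposition.transpose_def)
  then show ?thesis using gen_mult[OF gen_mult[OF gen_mult[OF gen_mult[OF gen_mult[OF gen_mult[OF gen_mult[OF gen_mult[OF WG_gen(2) WG_gen(1)] WG_gen(4)] WG_gen(5)] WG_gen(2)] WG_gen(1)] WG_gen(5)] WG_gen(2)] WG_gen(4)] by simp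
qed

lemma R_0_4_p: "REF 0 4 1 \<in> generate (GL_grp 5) WG"
proof -
  have "W4 * W3 * W4 = REF 0 4 1"
    unfolding W4_def W0_def W1_def W2_def W3_def REF_def
    by (simp add: spm_mult_tr spm_mult_tr2, rule spm_cong5) (simp_all add: Transposition.transpose_def)
  then show ?thesis using gen_mult[OF gen_mult[OF WG_gen(5) WG_gen(4)] WG_gen(5)] by simp
qed

lemma R_1_2_m: "REF 1 2 (-1) \<in> generate (GL_grp 5) WG"
proof -
  have "W0 = REF 1 2 (-1)"
    unfolding W4_def W0_def W1_def W2_def W3_def REF_def
    by (rule spm_cong5) (simp_all add: Transposition.transpose_def)
  then show ?thesis using WG_gen(1) by simp
qed

lemma R_1_2_p: "REF 1 2 1 \<in> generate (GL_grp 5) WG"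
proof -
  have "W2 = REF 1 2 1"
    unfolding W4_def W0_def W1_def W2_def W3_def REF_def
    by (rule spm_cong5) (simp_all add: Transposition.transpose_def)
  then show ?thesis using WG_gen(3) by simp
qed

lemma R_1_3_m: "REF 1 3 (-1) \<in> generate (GL_grp 5) WG"
proof -
  have "W0 * W4 * W1 * W0 * W4 = REF 1 3 (-1)"
    unfolding W4_def W0_def W1_def W2_def W3_def REF_def
    by (simp add: spm_mult_tr spm_mult_tr2, rule spm_cong5) (simp_all add: Transposition.transpose_def)
  then show ?thesis using gen_mult[OF gen_mult[OF gen_mult[OF gen_mult[OF WG_gen(1) WG_gen(5)] WG_gen(2)] WG_gen(1)] WG_gen(5)] by simp
qed

lemma R_1_3_p: "REF 1 3 1 \<in> generate (GL_grp 5) WG"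
proof -
  have "W1 * W2 * W4 * W1 = REF 1 3 1"
    unfolding W4_def W0_def W1_def W2_def W3_def REF_def
    by (simp add: spm_mult_tr spm_mult_tr2, rule spm_cong5) (simp_all add: Transposition.transpose_def)
  then show ?thesis using gen_mult[OF gen_mult[OF gen_mult[OF WG_gen(2) WG_gen(3)] WG_gen(5)] WG_gen(2)] by simp
qed

lemma R_1_4_m: "REF 1 4 (-1) \<in> generate (GL_grp 5) WG"
proof -
  have "W0 * W3 * W4 * W1 * W0 * W4 * W3 = REF 1 4 (-1)"
    unfolding W4_def W0_def W1_def W2_def W3_def REF_def
    by (simp add: spm_mult_tr spm_mult_tr2, rule spm_cong5) (simp_all add: Transposition.transpose_def)
  then show ?thesis using gen_mult[OF gen_mult[OF gen_mult[OF gen_mult[OF gen_mult[OF gen_mult[OF WG_gen(1) WG_gen(4)] WG_gen(5)] WG_gen(2)] WG_gen(1)] WG_gen(5)] WG_gen(4)] by simp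
qed

lemma R_1_4_p: "REF 1 4 1 \<in> generate (GL_grp 5) WG"
proof -
  have "W1 * W4 * W3 * W4 * W1 = REF 1 4 1"
    unfolding W4_def W0_def W1_def W2_def W3_def REF_def
    by (simp add: spm_mult_tr spm_mult_tr2, rule spm_cong5) (simp_all add: Transposition.transpose_def)
  then show ?thesis using gen_mult[OF gen_mult[OF gen_mult[OF gen_mult[OF WG_gen(2) WG_gen(5)] WG_gen(4)] WG_gen(5)] WG_gen(2)] by simp
qed

lemma R_2_3_m: "REF 2 3 (-1) \<in> generate (GL_grp 5) WG"
proof -
  have "W0 * W1 * W2 * W4 * W1 * W0 = REF 2 3 (-1)"
    unfolding W4_def W0_def W1_def W2_def W3_def REF_def
    by (simp add: spm_mult_tr spm_mult_tr2, rule spm_cong5) (simp_all add: Transposition.transpose_def)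
  then show ?thesis using gen_mult[OF gen_mult[OF gen_mult[OF gen_mult[OF gen_mult[OF WG_gen(1) WG_gen(2)] WG_gen(3)] WG_gen(5)] WG_gen(2)] WG_gen(1)] by simp
qed

lemma R_2_3_p: "REF 2 3 1 \<in> generate (GL_grp 5) WG"
proof -
  have "W4 * W1 * W4 = REF 2 3 1"
    unfolding W4_def W0_def W1_def W2_def W3_def REF_def
    by (simp add: spm_mult_tr spm_mult_tr2, rule spm_cong5) (simp_all add: Transposition.transpose_def)
  then show ?thesis using gen_mult[OF gen_mult[OF WG_gen(5) WG_gen(2)] WG_gen(5)] by simp
qed

lemma R_2_4_m: "REF 2 4 (-1) \<in> generate (GL_grp 5) WG"
proof -
  have "W0 * W1 * W4 * W3 * W4 * W1 * W0 = REF 2 4 (-1)"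
    unfolding W4_def W0_def W1_def W2_def W3_def REF_def
    by (simp add: spm_mult_tr spm_mult_tr2, rule spm_cong5) (simp_all add: Transposition.transpose_def)
  then show ?thesis using gen_mult[OF gen_mult[OF gen_mult[OF gen_mult[OF gen_mult[OF gen_mult[OF WG_gen(1) WG_gen(2)] WG_gen(5)] WG_gen(4)] WG_gen(5)] WG_gen(2)] WG_gen(1)] by simp
qed

lemma R_2_4_p: "REF 2 4 1 \<in> generate (GL_grp 5) WG"
proof -
  have "W3 * W4 * W1 * W4 * W3 = REF 2 4 1"
    unfolding W4_def W0_def W1_def W2_def W3_def REF_def
    by (simp add: spm_mult_tr spm_mult_tr2, rule spm_cong5) (simp_all add: Transposition.transpose_def)
  then show ?thesis using gen_mult[OF gen_mult[OF gen_mult[OF gen_mult[OF WG_gen(4) WG_gen(5)] WG_gen(2)] WG_gen(5)] WG_gen(4)] by simp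
qed

lemma R_3_4_m: "REF 3 4 (-1) \<in> generate (GL_grp 5) WG"
proof -
  have "W4 * W1 * W0 * W3 * W4 * W1 * W0 * W4 * W1 * W3 * W4 = REF 3 4 (-1)"
    unfolding W4_def W0_def W1_def W2_def W3_def REF_def
    by (simp add: spm_mult_tr spm_mult_tr2, rule spm_cong5) (simp_all add: Transposition.transpose_def)
  then show ?thesis using gen_mult[OF gen_mult[OF gen_mult[OF gen_mult[OF gen_mult[OF gen_mult[OF gen_mult[OF gen_mult[OF gen_mult[OF gen_mult[OF WG_gen(5) WG_gen(2)] WG_gen(1)] WG_gen(4)] WG_gen(5)] WG_gen(2)] WG_gen(1)] WG_gen(5)] WG_gen(2)] WG_gen(4)] WG_gen(5)] by simp
qed

lemma R_3_4_p: "REF 3 4 1 \<in> generate (GL_grp 5) WG"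
proof -
  have "W3 = REF 3 4 1"
    unfolding W4_def W0_def W1_def W2_def W3_def REF_def
    by (rule spm_cong5) (simp_all add: Transposition.transpose_def)
  then show ?thesis using WG_gen(4) by simp
qed


lemma REF_sym: "REF i j c = REF j i c"
  unfolding REF_def by (simp add: Transposition.transpose_commute disj_commute)

lemma pairs5: assumes "P 0 1" "P 0 2" "P 0 3" "P 0 4" "P 1 2" "P 1 3" "P 1 4" "P 2 3" "P 2 4" "P 3 4"
  and "i < j" "j < (5::nat)" shows "P i j"
  using assms by (auto simp: less_Suc_eq numeral_eq_Suc)

lemma REF_gen_lt: assumes "i < j" "j < 5" "c = 1 \<or> c = -1" shows "REF i j c \<in> generate (GL_grp 5) WG"
proof -
  have "REF 0 1 c \<in> generate (GL_grp 5) WG" "REF 0 2 c \<in> generate (GL_grp 5) WG" "REF 0 3 c \<in> generate (GL_grp 5) WG" "REF 0 4 c \<in> generate (GL_grp 5) WG" "REF 1 2 c \<in> generate (GL_grp 5) WG" "REF 1 3 c \<in> generate (GL_grp 5) WG" "REF 1 4 c \<in> generate (GL_grp 5) WG" "REF 2 3 c \<in> generate (GL_grp 5) WG" "REF 2 4 c \<in> generate (GL_grp 5) WG" "REF 3 4 c \<in> generate (GL_grp 5) WG"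
    using assms(3) R_0_1_p R_0_1_m R_0_2_p R_0_2_m R_0_3_p R_0_3_m R_0_4_p R_0_4_m R_1_2_p R_1_2_m R_1_3_p R_1_3_m R_1_4_p R_1_4_m R_2_3_p R_2_3_m R_2_4_p R_2_4_m R_3_4_p R_3_4_m by auto
  then show ?thesis using pairs5[where P = "\<lambda>i j. REF i j c \<in> generate (GL_grp 5) WG", OF _ _ _ _ _ _ _ _ _ _ assms(1,2)] by blast
qed

lemma REF_gen: assumes "i < 5" "j < 5" "i \<noteq> j" "c \<in> {-1, 1::real}" shows "REF i j c \<in> generate (GL_grp 5) WG"
proof (cases "i < j")
  case True then show ?thesis using REF_gen_lt assms by auto
next
  case False then have "j < i" using assms by auto
  then show ?thesis using REF_gen_lt[of j i c] assms REF_sym by auto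
qed

lemma RR_WG: "RR \<subseteq> generate (GL_grp 5) WG"
  using RR_cases REF_gen by blast

lemma WG_TT: "WG \<subseteq> TT"
proof -
  have one: "(\<lambda>_. 1::real) \<in> SG" unfolding SG_def by auto
  have "W0 = REF 1 2 (-1)" unfolding W0_def REF_def by simp
  moreover have "W1 = REF 0 1 1" unfolding W1_def REF_def by simp
  moreover have "W2 = REF 1 2 1" unfolding W2_def REF_def by simp
  moreover have "W3 = REF 3 4 1" unfolding W3_def REF_def by simp
  moreover have "W4 \<in> TT"
  proof -
    have "Transposition.transpose 0 3 \<circ> Transposition.transpose 1 2 permutes {..<5::nat}"
      by (intro permutes_compose permutes_swap_id) auto
    then show ?thesis unfolding W4_def TT_def using one by blast
  qed
  moreover have "REF 1 2 (-1) \<in> TT" "REF 0 1 1 \<in> TT" "REF 1 2 1 \<in> TT" "REF 3 4 1 \<in> TT"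
    by (auto intro!: REF_TT)
  ultimately show ?thesis unfolding WG_def by auto
qed

lemma WG_carrier: "WG \<subseteq> carrier (GL_grp 5)" using WG_TT TT_sub by blast

lemma gen_WG: "generate (GL_grp 5) WG = TT"
proof
  show "generate (GL_grp 5) WG \<subseteq> TT"
    by (rule group.generate_subgroup_incl[OF GL_group WG_TT TT_subgroup])
  have "generate (GL_grp 5) RR \<subseteq> generate (GL_grp 5) WG"
    by (rule group.generate_subgroup_incl[OF GL_group RR_WG group.generate_is_subgroup[OF GL_group WG_carrier]])
  then show "TT \<subseteq> generate (GL_grp 5) WG" using gen_RR by simp
qed


section \<open>The 7-dimensional representation\<close>

lemma mrl: "i < length rs \<Longrightarrow> j < n \<Longrightarrow> mat_of_rows_list n rs $$ (i,j) = rs ! i ! j"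
  by (simp add: mat_of_rows_list_def)
lemma mrlc: "length rs = m \<Longrightarrow> mat_of_rows_list n rs \<in> carrier_mat m n" by (simp add: mat_of_rows_list_def)
lemma sum7: "(\<Sum>k\<in>{0..<7::nat}. f k) = f 0 + f 1 + f 2 + f 3 + f 4 + f 5 + f 6"
  by (simp add: eval_nat_numeral atLeast0_lessThan_Suc add.commute add.left_commute)
lemma mult7: "A \<in> carrier_mat 7 7 \<Longrightarrow> B \<in> carrier_mat 7 7 \<Longrightarrow> i < 7 \<Longrightarrow> j < 7 \<Longrightarrow>
   (A*B)$$(i,j) = A$$(i,0)*B$$(0,j) + A$$(i,1)*B$$(1,j) + A$$(i,2)*B$$(2,j) + A$$(i,3)*B$$(3,j) + A$$(i,4)*B$$(4,j) + A$$(i,5)*B$$(5,j) + A$$(i,6)*B$$(6,j)"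
  by (simp add: scalar_prod_def sum7)
lemma lt7: "(i::nat) < 7 \<Longrightarrow> i \<in> {0,1,2,3,4,5,6}" by auto
lemma mat7I: assumes "A \<in> carrier_mat 7 7" "B \<in> carrier_mat 7 7"
  "\<And>i j. i \<in> {0,1,2,3,4,5,6} \<Longrightarrow> j \<in> {0,1,2,3,4,5,6} \<Longrightarrow> A$$(i,j) = B$$(i,j)" shows "A = B"
  using assms lt7 by (intro eq_matI) auto

definition Qm :: "complex mat" where
  "Qm = mat_of_rows_list 7
   [[1, 1, 1, 1, 1, 0, 1],
    [1, -1, -1, 1, 1, 0, 1],
    [-1, 1, -1, 1, 1, 0, 1],
    [-1, -1, 1, 1, 1, 0, 1],
    [0, 0, 0, 2, 2, 1, 0],
    [0, 0, 0, 2, 0, 0, 2],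
    [0, 0, 0, 0, 2, 0, 2]]"

definition Qi :: "complex mat" where
  "Qi = mat_of_rows_list 7
   [[1/4, 1/4, -1/4, -1/4, 0, 0, 0],
    [1/4, -1/4, 1/4, -1/4, 0, 0, 0],
    [1/4, -1/4, -1/4, 1/4, 0, 0, 0],
    [1/4, 1/4, 1/4, 1/4, 0, 0, -1/2],
    [1/4, 1/4, 1/4, 1/4, 0, -1/2, 0],
    [-1, -1, -1, -1, 1, 1, 1],
    [-1/4, -1/4, -1/4, -1/4, 0, 1/2, 1/2]]"

lemma Qc: "Qm \<in> carrier_mat 7 7" unfolding Qm_def by (rule mrlc) simp
lemma Qic: "Qi \<in> carrier_mat 7 7" unfolding Qi_def by (rule mrlc) simp

lemma QQi: "Qm * Qi = 1\<^sub>m 7"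
  apply (rule mat7I)
    apply (rule mult_carrier_mat[OF Qc Qic])
   apply simp
  apply (simp only: insert_iff empty_iff simp_thms)
  apply (elim disjE)
  apply (simp_all add: mult7[OF Qc Qic])
  apply (simp_all add: Qm_def Qi_def mrl)
  done

lemma QiQ: "Qi * Qm = 1\<^sub>m 7"
  apply (rule mat7I)
    apply (rule mult_carrier_mat[OF Qic Qc])
   apply simp
  apply (simp only: insert_iff empty_iff simp_thms)
  apply (elim disjE)
  apply (simp_all add: mult7[OF Qic Qc])
  apply (simp_all add: Qm_def Qi_def mrl)
  done

definition Dm :: "real mat \<Rightarrow> complex mat" where
  "Dm w = mat 7 7 (\<lambda>(i,j). if i < 5 \<and> j < 5 then complex_of_real (w $$ (i,j)) else if i = j then 1 else 0)"

lemma Dc[simp]: "Dm w \<in> carrier_mat 7 7" by (simp add: Dm_def)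

lemma Dm_index: "i < 7 \<Longrightarrow> j < 7 \<Longrightarrow> Dm w $$ (i,j) = (if i < 5 \<and> j < 5 then complex_of_real (w $$ (i,j)) else if i = j then 1 else 0)"
  by (simp add: Dm_def)

lemma sum5: "(\<Sum>k\<in>{0..<5::nat}. f k) = f 0 + f 1 + f 2 + f 3 + f 4"
  by (simp add: eval_nat_numeral atLeast0_lessThan_Suc add.commute add.left_commute)

lemma mult5: "A \<in> carrier_mat 5 5 \<Longrightarrow> B \<in> carrier_mat 5 5 \<Longrightarrow> i < 5 \<Longrightarrow> j < 5 \<Longrightarrow>
   (A*B)$$(i,j) = A$$(i,0)*B$$(0,j) + A$$(i,1)*B$$(1,j) + A$$(i,2)*B$$(2,j) + A$$(i,3)*B$$(3,j) + A$$(i,4)*B$$(4,j)"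
  by (simp add: scalar_prod_def sum5)

lemma Dm_mult: assumes a: "a \<in> carrier_mat 5 5" and b: "b \<in> carrier_mat 5 5"
  shows "Dm (a * b) = Dm a * Dm b"
  apply (rule mat7I)
    apply simp
   apply (rule mult_carrier_mat[OF Dc Dc])
  apply (simp only: insert_iff empty_iff simp_thms)
  apply (elim disjE)
  apply (simp_all add: mult7[OF Dc Dc] Dm_index mult5[OF a b])
  done

lemma Dm_one: "Dm (1\<^sub>m 5) = 1\<^sub>m 7"
  by (rule eq_matI) (auto simp: Dm_def)

lemma Dm_inj: assumes a: "a \<in> carrier_mat 5 5" and b: "b \<in> carrier_mat 5 5" and eq: "Dm a = Dm b"
  shows "a = b"
proof (rule eq_matI)
  fix i j assume "i < dim_row b" "j < dim_col b"
  then have ij: "i < 5" "j < 5" using b by auto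
  have "Dm a $$ (i,j) = Dm b $$ (i,j)" using eq by simp
  then show "a $$ (i,j) = b $$ (i,j)" using ij by (simp add: Dm_index)
qed (use a b in auto)

lemma m7c[simp]: "A \<in> carrier_mat 7 7 \<Longrightarrow> B \<in> carrier_mat 7 7 \<Longrightarrow> A * B \<in> carrier_mat 7 7"
  by (rule mult_carrier_mat)

lemma QiQ_left[simp]: "X \<in> carrier_mat 7 7 \<Longrightarrow> Qi * (Qm * X) = X"
  using assoc_mult_mat[OF Qic Qc, of X 7] QiQ by simp

lemma QQi_left[simp]: "X \<in> carrier_mat 7 7 \<Longrightarrow> Qm * (Qi * X) = X"
  using assoc_mult_mat[OF Qc Qic, of X 7] QQi by simp

lemmas assoc7 = assoc_mult_mat[of _ 7 7 _ 7 _ 7]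

definition psi :: "real mat \<Rightarrow> complex mat" where
  "psi w = Qm * (Dm w * Qi)"

lemma psi_carrier: "psi w \<in> carrier_mat 7 7"
  unfolding psi_def using Qc Qic by simp

lemma psi_mult: assumes a: "a \<in> carrier_mat 5 5" and b: "b \<in> carrier_mat 5 5"
  shows "psi (a * b) = psi a * psi b"
proof -
  have "psi a * psi b = Qm * (Dm a * (Qi * (Qm * (Dm b * Qi))))"
    unfolding psi_def using Qc Qic by (simp add: assoc7)
  also have "\<dots> = Qm * (Dm a * (Dm b * Qi))" using Qic by simp
  also have "\<dots> = psi (a * b)" unfolding psi_def Dm_mult[OF a b] using Qic by (simp add: assoc7)
  finally show ?thesis by simp
qed

lemma psi_one: "psi (1\<^sub>m 5) = 1\<^sub>m 7"
  unfolding psi_def Dm_one using Qic QQi by simp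

lemma psi_inj: assumes a: "a \<in> carrier_mat 5 5" and b: "b \<in> carrier_mat 5 5" and eq: "psi a = psi b"
  shows "a = b"
proof -
  have "Qi * (psi a * Qm) = Dm a" for a
    unfolding psi_def using Qic Qc by (simp add: assoc7 QiQ right_mult_one_mat[OF Dc])
  then have "Dm a = Dm b" using eq by metis
  then show ?thesis using Dm_inj a b by blast
qed

lemma psi_hom: "psi \<in> hom (GL_grp 5) (GL_grp 7)"
proof (rule homI)
  fix x assume "x \<in> carrier (GL_grp 5 :: real mat monoid)"
  then have xc: "x \<in> carrier_mat 5 5" and xi: "invertible_mat x" by (auto simp: GL_grp_def)
  obtain B where B: "x * B = 1\<^sub>m 5" "B * x = 1\<^sub>m (dim_row B)"
    using xc xi unfolding invertible_mat_def inverts_mat_def by auto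
  have Bc: "B \<in> carrier_mat 5 5"
    using B xc by (metis carrier_matD(1) carrier_matD(2) carrier_matI index_mult_mat(2) index_mult_mat(3) index_one_mat(2) index_one_mat(3))
  have "psi x * psi B = 1\<^sub>m 7" using psi_mult[OF xc Bc] B psi_one by simp
  moreover have "psi B * psi x = 1\<^sub>m 7" using psi_mult[OF Bc xc] B Bc psi_one by simp
  ultimately have "invertible_mat (psi x)"
    using psi_carrier unfolding invertible_mat_def inverts_mat_def
    by (metis carrier_matD(1) carrier_matD(2) psi_carrier square_mat.simps)
  then show "psi x \<in> carrier (GL_grp 7)" using psi_carrier by (simp add: GL_grp_def)
next
  fix x y assume "x \<in> carrier (GL_grp 5 :: real mat monoid)" "y \<in> carrier (GL_grp 5 :: real mat monoid)"
  then show "psi (x \<otimes>\<^bsub>GL_grp 5\<^esub> y) = psi x \<otimes>\<^bsub>GL_grp 7\<^esub> psi y"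
    by (simp add: GL_grp_def psi_mult)
qed


lemma pmc: "perm_matrix 7 s \<in> carrier_mat 7 7" by (simp add: perm_matrix_def)
lemma Ac: "A_mat \<in> carrier_mat 7 7" unfolding A_mat_def by (rule mrlc) simp

lemma psi_from: assumes L: "L \<in> carrier_mat 7 7" and eq: "L * Qm = Qm * Dm W" shows "psi W = L"
proof -
  have "psi W = (Qm * Dm W) * Qi" unfolding psi_def using Qc Qic by (simp add: assoc7)
  also have "\<dots> = (L * Qm) * Qi" using eq by simp
  also have "\<dots> = L" using L Qc Qic QQi by (simp add: assoc7)
  finally show ?thesis .
qed

lemma L0: "psi W0 = perm_matrix 7 (Transposition.transpose 0 1)"
proof (rule psi_from)
  show "perm_matrix 7 (Transposition.transpose 0 1) \<in> carrier_mat 7 7" by (rule pmc)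
  show "perm_matrix 7 (Transposition.transpose 0 1) * Qm = Qm * Dm W0"
  apply (rule mat7I)
    apply (rule mult_carrier_mat[OF pmc Qc])
   apply (rule mult_carrier_mat[OF Qc Dc])
  apply (simp only: insert_iff empty_iff simp_thms)
  apply (elim disjE)
  apply (simp_all add: mult7[OF pmc Qc] mult7[OF Qc Dc])
  apply (simp_all add: perm_matrix_def Qm_def mrl Dm_def spm_def W0_def Transposition.transpose_def)
  done
qed

lemma L1: "psi W1 = perm_matrix 7 (Transposition.transpose 1 2)"
proof (rule psi_from)
  show "perm_matrix 7 (Transposition.transpose 1 2) \<in> carrier_mat 7 7" by (rule pmc)
  show "perm_matrix 7 (Transposition.transpose 1 2) * Qm = Qm * Dm W1"
  apply (rule mat7I)
    apply (rule mult_carrier_mat[OF pmc Qc])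
   apply (rule mult_carrier_mat[OF Qc Dc])
  apply (simp only: insert_iff empty_iff simp_thms)
  apply (elim disjE)
  apply (simp_all add: mult7[OF pmc Qc] mult7[OF Qc Dc])
  apply (simp_all add: perm_matrix_def Qm_def mrl Dm_def spm_def W1_def Transposition.transpose_def)
  done
qed

lemma L2: "psi W2 = perm_matrix 7 (Transposition.transpose 2 3)"
proof (rule psi_from)
  show "perm_matrix 7 (Transposition.transpose 2 3) \<in> carrier_mat 7 7" by (rule pmc)
  show "perm_matrix 7 (Transposition.transpose 2 3) * Qm = Qm * Dm W2"
  apply (rule mat7I)
    apply (rule mult_carrier_mat[OF pmc Qc])
   apply (rule mult_carrier_mat[OF Qc Dc])
  apply (simp only: insert_iff empty_iff simp_thms)
  apply (elim disjE)
  apply (simp_all add: mult7[OF pmc Qc] mult7[OF Qc Dc])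
  apply (simp_all add: perm_matrix_def Qm_def mrl Dm_def spm_def W2_def Transposition.transpose_def)
  done
qed

lemma L3: "psi W3 = perm_matrix 7 (Transposition.transpose 5 6)"
proof (rule psi_from)
  show "perm_matrix 7 (Transposition.transpose 5 6) \<in> carrier_mat 7 7" by (rule pmc)
  show "perm_matrix 7 (Transposition.transpose 5 6) * Qm = Qm * Dm W3"
  apply (rule mat7I)
    apply (rule mult_carrier_mat[OF pmc Qc])
   apply (rule mult_carrier_mat[OF Qc Dc])
  apply (simp only: insert_iff empty_iff simp_thms)
  apply (elim disjE)
  apply (simp_all add: mult7[OF pmc Qc] mult7[OF Qc Dc])
  apply (simp_all add: perm_matrix_def Qm_def mrl Dm_def spm_def W3_def Transposition.transpose_def)
  done
qed

lemma L4: "psi W4 = A_mat"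
proof (rule psi_from)
  show "A_mat \<in> carrier_mat 7 7" by (rule Ac)
  show "A_mat * Qm = Qm * Dm W4"
  apply (rule mat7I)
    apply (rule mult_carrier_mat[OF Ac Qc])
   apply (rule mult_carrier_mat[OF Qc Dc])
  apply (simp only: insert_iff empty_iff simp_thms)
  apply (elim disjE)
  apply (simp_all add: mult7[OF Ac Qc] mult7[OF Qc Dc])
  apply (simp_all add: A_mat_def mrl Qm_def mrl Dm_def spm_def W4_def Transposition.transpose_def)
  done
qed

lemma Lgens_eq: "{perm_matrix 7 (Transposition.transpose 0 1), perm_matrix 7 (Transposition.transpose 1 2),
      perm_matrix 7 (Transposition.transpose 2 3), perm_matrix 7 (Transposition.transpose 5 6),
      A_mat} = psi ` WG"
  unfolding WG_def using L0 L1 L2 L3 L4 by simp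

lemma carrier_W: "carrier (W_D 5) = TT"
  unfolding W_D_def gen_subgroup_def using gen_RR by (simp add: RR_def)

lemma carrier_GL: "carrier G_L = psi ` TT"
proof -
  interpret gh: group_hom "GL_grp 5 :: real mat monoid" "GL_grp 7 :: complex mat monoid" psi
    unfolding group_hom_def group_hom_axioms_def by (intro conjI GL_group psi_hom)
  have "carrier G_L = generate (GL_grp 7) (psi ` WG)"
    unfolding G_L_def gen_subgroup_def Lgens_eq by simp
  also have "\<dots> = psi ` generate (GL_grp 5) WG" by (rule gh.generate_img[OF WG_carrier])
  finally show ?thesis using gen_WG by simp
qed

lemma TT_carrier_mat: "TT \<subseteq> carrier_mat 5 5" unfolding TT_def by auto

theorem theorem4p1:
  shows "G_L \<cong> W_D 5 \<and> order (W_D 5) = 1920"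
proof
  show "order (W_D 5) = 1920" unfolding order_def carrier_W by (rule card_TT)
  have grpW: "group (W_D 5)"
  proof -
    have "W_D 5 = (GL_grp 5)\<lparr>carrier := TT\<rparr>" unfolding W_D_def gen_subgroup_def using gen_RR by (simp add: RR_def)
    then show ?thesis using group.subgroup_imp_group[OF GL_group TT_subgroup] by simp
  qed
  have "psi \<in> iso (W_D 5) G_L"
  proof (rule isoI)
    show "psi \<in> hom (W_D 5) G_L"
    proof (rule homI)
      fix x assume "x \<in> carrier (W_D 5)"
      then show "psi x \<in> carrier G_L" using carrier_W carrier_GL by auto
    next
      fix x y assume "x \<in> carrier (W_D 5)" "y \<in> carrier (W_D 5)"
      then have "x \<in> carrier_mat 5 5" "y \<in> carrier_mat 5 5" using carrier_W TT_carrier_mat by auto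
      then show "psi (x \<otimes>\<^bsub>W_D 5\<^esub> y) = psi x \<otimes>\<^bsub>G_L\<^esub> psi y"
        by (simp add: W_D_def G_L_def gen_subgroup_def GL_grp_def psi_mult)
    qed
    have "inj_on psi TT"
      using psi_inj TT_carrier_mat by (auto intro!: inj_onI)
    then show "bij_betw psi (carrier (W_D 5)) (carrier G_L)"
      unfolding carrier_W carrier_GL by (simp add: bij_betw_def)
  qed
  then have "W_D 5 \<cong> G_L" by (rule is_isoI)
  then show "G_L \<cong> W_D 5" by (rule group.iso_sym[OF grpW])
qed

end
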